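(* Let $q$ be a power of a prime $p$ and let $L\subseteq[q-1]$. Let $\mathcal{F}\subseteq 2^{[n]}$ be $q$-modular $L$-differencing Sperner. Suppose $g\in\mathbb{Z}[y]$ is a polynomial of degree $d$ such that $v_p(g(0))<v_p(g(u))$ for every $u\in L+q\mathbb{Z}$. Then $$|\mathcal{F}|\le\sum_{i=0}^{d}\binom{n}{i}.$$ If in addition either $v_p(g(0))\le v_p(g(u-1))$ for every $u\in L+q\mathbb{Z}$, or $v_p(g(0))\le v_p(g(u+1))$ for every $u\in L+q\mathbb{Z}$, then $$|\mathcal{F}|\le\sum_{i=0}^{d}\binom{n-1}{i}.$$
   Context: $[n]=\{1,\ldots,n\}$, $2^{[n]}$ is the family of all subsets of $[n]$, $L+q\mathbb{Z}=\{\ell+qt:\ell\in L,t\in\mathbb{Z}\}$. For a prime $p$ and integer $m$, $v_p(m)$ is the largest $k\ge0$ with $p^k\mid m$, and $v_p(0)=+\infty$. For $L\subseteq[q-1]$, $\mathcal{F}$ is $q$-modular $L$-differencing Sperner if for all distinct $A,B\in\mathcal{F}$, $|A\setminus B|\equiv\ell\pmod q$ for some $\ell\in L$. *)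

theory Defs
  imports "HOL-Computational_Algebra.Computational_Algebra" "HOL-Library.Extended_Nat"
begin

definition vp :: "nat \<Rightarrow> int \<Rightarrow> enat" where
  "vp p m = (if m = 0 then \<infinity> else enat (multiplicity (int p) m))"

definition mod_L_diff_sperner :: "nat \<Rightarrow> nat set \<Rightarrow> nat set set \<Rightarrow> bool" where
  "mod_L_diff_sperner q L F \<longleftrightarrow>
     (\<forall>A\<in>F. \<forall>B\<in>F. A \<noteq> B \<longrightarrow> (\<exists>l\<in>L. card (A - B) mod q = l mod q))"

definition shift_set :: "nat set \<Rightarrow> nat \<Rightarrow> int set" where
  "shift_set L q = {int l + int q * t | l t. l \<in> L}"

end

theory Submission imports Defs "HOL-Library.Function_Algebras" begin

definition sc :: "rat \<Rightarrow> (nat set \<Rightarrow> rat) \<Rightarrow> (nat set \<Rightarrow> rat)" where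
  "sc c f = (\<lambda>x. c * f x)"

global_interpretation VS: vector_space sc
  by unfold_locales (auto simp: sc_def fun_eq_iff algebra_simps)

lemma sum_fun_apply: "(\<Sum>a\<in>A. f a) x = (\<Sum>a\<in>A. f a x)"
  by (induct A rule: infinite_finite_induct) auto

definition mon :: "nat set \<Rightarrow> nat set \<Rightarrow> rat" where
  "mon S = (\<lambda>Y. if S \<subseteq> Y then 1 else 0)"

definition MS :: "nat set \<Rightarrow> nat \<Rightarrow> (nat set \<Rightarrow> rat) set" where
  "MS N k = mon ` {S. S \<subseteq> N \<and> card S \<le> k}"

lemma MS_mono: "j \<le> k \<Longrightarrow> VS.span (MS N j) \<subseteq> VS.span (MS N k)"
  by (rule VS.span_mono) (auto simp: MS_def)

lemma mult_step:
  assumes fin: "finite N" and TN: "T \<subseteq> N" and h: "h \<in> VS.span (MS N k)"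
  shows "(\<lambda>Y. of_nat (card (Y \<inter> T)) * h Y) \<in> VS.span (MS N (Suc k))"
  using h
proof (induct rule: VS.span_induct)
  case base
  let ?V = "VS.span (MS N (Suc k))"
  show ?case unfolding VS.subspace_def
  proof (intro conjI ballI allI)
    show "0 \<in> Collect (\<lambda>h. (\<lambda>Y. of_nat (card (Y \<inter> T)) * h Y) \<in> ?V)"
      using VS.span_zero by (simp add: zero_fun_def)
  next
    fix f g assume f: "f \<in> Collect (\<lambda>h. (\<lambda>Y. of_nat (card (Y \<inter> T)) * h Y) \<in> ?V)"
      and g: "g \<in> Collect (\<lambda>h. (\<lambda>Y. of_nat (card (Y \<inter> T)) * h Y) \<in> ?V)"
    have "(\<lambda>Y. of_nat (card (Y \<inter> T)) * (f + g) Y) =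
       (\<lambda>Y. of_nat (card (Y \<inter> T)) * f Y) + (\<lambda>Y. of_nat (card (Y \<inter> T)) * g Y)"
      by (simp add: fun_eq_iff algebra_simps)
    then show "f + g \<in> Collect (\<lambda>h. (\<lambda>Y. of_nat (card (Y \<inter> T)) * h Y) \<in> ?V)"
      using f g VS.span_add by auto
  next
    fix c f assume f: "f \<in> Collect (\<lambda>h. (\<lambda>Y. of_nat (card (Y \<inter> T)) * h Y) \<in> ?V)"
    have "(\<lambda>Y. of_nat (card (Y \<inter> T)) * sc c f Y) = sc c (\<lambda>Y. of_nat (card (Y \<inter> T)) * f Y)"
      by (simp add: fun_eq_iff sc_def algebra_simps)
    then show "sc c f \<in> Collect (\<lambda>h. (\<lambda>Y. of_nat (card (Y \<inter> T)) * h Y) \<in> ?V)"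
      using f VS.span_scale by auto
  qed
next
  case (step x)
  then obtain S where S: "S \<subseteq> N" "card S \<le> k" and x: "x = mon S" by (auto simp: MS_def)
  have finT: "finite T" using fin TN finite_subset by blast
  have eq: "(\<lambda>Y. of_nat (card (Y \<inter> T)) * x Y) = (\<Sum>i\<in>T. mon (insert i S))"
  proof
    fix Y
    have "of_nat (card (Y \<inter> T)) = (\<Sum>i\<in>T. (if i \<in> Y then 1 else 0 :: rat))"
      using finT by (simp add: sum.If_cases Int_commute)
    then show "of_nat (card (Y \<inter> T)) * x Y = (\<Sum>i\<in>T. mon (insert i S)) Y"
      by (simp add: sum_fun_apply x mon_def sum_distrib_right)
  qed
  have "(\<Sum>i\<in>T. mon (insert i S)) \<in> VS.span (MS N (Suc k))"
  proof (rule VS.span_sum)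
    fix i assume "i \<in> T"
    moreover have "finite S" using S fin finite_subset by blast
    ultimately have "insert i S \<subseteq> N" "card (insert i S) \<le> Suc k"
      using S TN by (auto simp: card_insert_if)
    then show "mon (insert i S) \<in> VS.span (MS N (Suc k))"
      by (intro VS.span_base) (auto simp: MS_def)
  qed
  then show ?case using eq by simp
qed

lemma pow_span:
  assumes fin: "finite N" and TN: "T \<subseteq> N"
  shows "(\<lambda>Y. of_nat (card (Y \<inter> T)) ^ j) \<in> VS.span (MS N j)"
proof (induct j)
  case 0
  have "(\<lambda>Y. (of_nat (card (Y \<inter> T)) :: rat) ^ 0) = mon {}" by (simp add: mon_def fun_eq_iff)
  then show ?case by (auto simp: MS_def intro!: VS.span_base)
next
  case (Suc j)
  from mult_step[OF fin TN Suc] show ?case by simp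
qed

lemma poly_span:
  assumes fin: "finite N" and TN: "T \<subseteq> N" and deg: "degree h \<le> k"
  shows "(\<lambda>Y. (of_int (poly h (int (card (Y \<inter> T)))) :: rat)) \<in> VS.span (MS N k)"
proof -
  have eq: "(\<lambda>Y. (of_int (poly h (int (card (Y \<inter> T)))) :: rat)) =
    (\<Sum>i\<le>degree h. sc (of_int (coeff h i)) (\<lambda>Y. of_nat (card (Y \<inter> T)) ^ i))"
    by (simp add: fun_eq_iff sum_fun_apply sc_def poly_altdef)
  show ?thesis unfolding eq
  proof (rule VS.span_sum)
    fix i assume "i \<in> {..degree h}"
    then have "i \<le> k" using deg by auto
    then show "sc (of_int (coeff h i)) (\<lambda>Y. of_nat (card (Y \<inter> T)) ^ i) \<in> VS.span (MS N k)"
      using MS_mono pow_span[OF fin TN, of i] by (intro VS.span_scale) blast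
  qed
qed

lemma card_MS: "finite N \<Longrightarrow> card (MS N k) \<le> (\<Sum>i=0..k. card N choose i)"
proof -
  assume fin: "finite N"
  have "{S. S \<subseteq> N \<and> card S \<le> k} = (\<Union>i\<in>{0..k}. {S. S \<subseteq> N \<and> card S = i})" by auto
  then have "card {S. S \<subseteq> N \<and> card S \<le> k} = (\<Sum>i=0..k. card {S. S \<subseteq> N \<and> card S = i})"
    using fin by (simp, subst card_UN_disjoint) (auto intro: finite_subset[of _ "Pow N"])
  also have "\<dots> = (\<Sum>i=0..k. card N choose i)" using n_subsets[OF fin] by simp
  moreover have "card (MS N k) \<le> card {S. S \<subseteq> N \<and> card S \<le> k}"
    unfolding MS_def by (rule card_image_le) (use fin in auto)
  ultimately show ?thesis by simp
qed


lemma clear_denoms: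
  fixes u :: "'a \<Rightarrow> rat"
  assumes "finite S"
  shows "\<exists>d::int. d > 0 \<and> (\<forall>v\<in>S. \<exists>k. u v * of_int d = of_int k)"
  using assms
proof (induct S rule: finite_induct)
  case empty
  show ?case by (intro exI[of _ 1]) auto
next
  case (insert x S)
  then obtain d where d: "d > 0" "\<forall>v\<in>S. \<exists>k. u v * of_int d = of_int k" by blast
  obtain a b where ab: "quotient_of (u x) = (a, b)" by (cases "quotient_of (u x)")
  have b: "b > 0" using quotient_of_denom_pos[OF ab] .
  have ux: "u x = of_int a / of_int b" using quotient_of_div[OF ab] .
  have "\<forall>v\<in>insert x S. \<exists>k. u v * of_int (d * b) = of_int k"
  proof
    fix v assume v: "v \<in> insert x S"
    show "\<exists>k. u v * of_int (d * b) = of_int k"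
    proof (cases "v = x")
      case True
      then have "u v * of_int (d * b) = of_int (a * d)" using ux b by (simp add: field_simps)
      then show ?thesis by blast
    next
      case False
      then have "v \<in> S" using v by auto
      then obtain k where "u v * of_int d = of_int k" using d by blast
      then have "u v * of_int (d * b) = of_int (k * b)" by (simp add: algebra_simps)
      then show ?thesis by blast
    qed
  qed
  moreover have "d * b > 0" using d b by simp
  ultimately show ?case by blast
qed

definition Dd :: "nat \<Rightarrow> nat set \<Rightarrow> nat set \<Rightarrow> nat" where
  "Dd n A B = (if n \<in> A then card (B - A) else card (A - B))"

definition row :: "nat \<Rightarrow> int poly \<Rightarrow> nat set \<Rightarrow> nat set \<Rightarrow> rat" where
  "row n g A = (if n \<in> A then (\<lambda>Y. of_int (poly g (int (card (Y \<inter> ({1..n-1} - A))))))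
     else (\<lambda>Y. of_int (poly (pcompose g [:int (card A), -1:]) (int (card (Y \<inter> A))))))"

lemma row_eval:
  assumes A: "A \<subseteq> {1..n}" and B: "B \<subseteq> {1..n}"
  shows "row n g A (B - {n}) = of_int (poly g (int (Dd n A B)))"
proof (cases "n \<in> A")
  case True
  have "(B - {n}) \<inter> ({1..n-1} - A) = B - A"
  proof (intro equalityI subsetI)
    fix x assume "x \<in> B - A"
    then have "x \<in> {1..n}" "x \<noteq> n" "x \<notin> A" "x \<in> B" using B True by auto
    then show "x \<in> (B - {n}) \<inter> ({1..n-1} - A)" by auto
  qed auto
  then show ?thesis using True by (simp add: row_def Dd_def)
next
  case False
  have fA: "finite A" using A finite_subset by blast
  have e: "(B - {n}) \<inter> A = A \<inter> B" using False by auto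
  have "card (A \<inter> B) \<le> card A" using fA by (intro card_mono) auto
  moreover have "card (A - B) = card A - card (A \<inter> B)" using fA by (simp add: card_Diff_subset_Int)
  ultimately have "int (card (A - B)) = int (card A) - int (card (A \<inter> B))" by simp
  then show ?thesis using False e by (simp add: row_def Dd_def poly_pcompose)
qed

lemma row_span:
  assumes A: "A \<subseteq> {1..n}"
  shows "row n g A \<in> VS.span (MS {1..n-1} (degree g))"
proof (cases "n \<in> A")
  case True
  then show ?thesis unfolding row_def by (simp, intro poly_span) auto
next
  case False
  have "A \<subseteq> {1..n-1}"
  proof
    fix x assume "x \<in> A"
    then have "x \<in> {1..n}" "x \<noteq> n" using A False by auto
    then show "x \<in> {1..n-1}" by auto
  qed
  moreover have "degree (pcompose g [:int (card A), -1:]) = degree g" by (simp add: degree_pcompose)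
  ultimately show ?thesis using False unfolding row_def by (simp, intro poly_span) auto
qed


lemma core:
  fixes p n \<nu> :: nat and F :: "nat set set" and g :: "int poly"
  assumes pr: "prime p" and FP: "F \<subseteq> Pow {1..n}"
    and g0: "(int p) ^ \<nu> dvd poly g 0" "\<not> (int p) ^ Suc \<nu> dvd poly g 0"
    and off: "\<And>A B. A \<in> F \<Longrightarrow> B \<in> F \<Longrightarrow> A \<noteq> B \<Longrightarrow> (int p) ^ Suc \<nu> dvd poly g (int (Dd n A B))"
  shows "card F \<le> (\<Sum>i=0..degree g. (n - 1) choose i)"
proof -
  define P where "P = int p"
  have prP: "prime P" using pr unfolding P_def by (simp only: prime_nat_int_transfer)
  have nuP: "\<not> is_unit P" using prP not_prime_unit by blast
  define R where "R = row n g ` F"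
  have DdA: "Dd n A A = 0" for A by (simp add: Dd_def)
  have ev: "row n g A (B - {n}) = of_int (poly g (int (Dd n A B)))" if "A \<in> F" "B \<in> F" for A B
    using row_eval[of A n B g] that FP by auto
  have inj: "inj_on (row n g) F"
  proof
    fix A B assume A: "A \<in> F" and B: "B \<in> F" and eq: "row n g A = row n g B"
    show "A = B"
    proof (rule ccontr)
      assume "A \<noteq> B"
      have "row n g A (A - {n}) = row n g B (A - {n})" using eq by simp
      then have "poly g 0 = poly g (int (Dd n B A))" using ev[OF A A] ev[OF B A] DdA by simp
      then show False using off[OF B A] \<open>A \<noteq> B\<close> g0(2) by auto
    qed
  qed
  have indep: "VS.independent R"
    unfolding VS.independent_explicit_finite_subsets
  proof (intro allI impI ballI)
    fix S u v assume SR: "S \<subseteq> R" and finS: "finite S"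
      and sum0: "(\<Sum>v\<in>S. sc (u v) v) = 0" and vS: "v \<in> S"
    show "u v = 0"
    proof (rule ccontr)
      assume uv: "u v \<noteq> 0"
      obtain d :: int where d: "d > 0" "\<forall>v\<in>S. \<exists>k. u v * of_int d = of_int k"
        using clear_denoms[OF finS] by blast
      define c where "c w = (SOME k. u w * of_int d = of_int k)" for w
      have c: "u w * of_int d = of_int (c w)" if "w \<in> S" for w
        unfolding c_def by (rule someI_ex) (use d(2) that in blast)
      have cnz: "c w \<noteq> 0 \<longleftrightarrow> u w \<noteq> 0" if "w \<in> S" for w
      proof -
        have "(of_int d :: rat) \<noteq> 0" using d(1) by simp
        then show ?thesis using c[OF that] by (metis mult_eq_0_iff of_int_eq_0_iff)
      qed
      define a where "a w = inv_into F (row n g) w" for w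
      have a: "a w \<in> F" "row n g (a w) = w" if "w \<in> S" for w
        using that SR unfolding a_def R_def by (auto intro: inv_into_into f_inv_into_f)
      define M where "M = {multiplicity P (c w) | w. w \<in> S \<and> c w \<noteq> 0}"
      have Mfin: "finite M" unfolding M_def using finS by simp
      have Mne: "M \<noteq> {}" unfolding M_def using vS uv cnz by blast
      obtain v0 where v0: "v0 \<in> S" "c v0 \<noteq> 0" "multiplicity P (c v0) = Min M"
        using Min_in[OF Mfin Mne] unfolding M_def by auto
      define m where "m = Min M"
      have dvdc: "P ^ m dvd c w" if "w \<in> S" for w
      proof (cases "c w = 0")
        case False
        then have "m \<le> multiplicity P (c w)" unfolding m_def
          using Mfin that by (intro Min_le) (auto simp: M_def)
        then show ?thesis by (rule multiplicity_dvd')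
      qed simp
      have sumY: "(\<Sum>w\<in>S. of_int (c w) * w Y) = (0::rat)" for Y
      proof -
        have "(\<Sum>w\<in>S. u w * w Y) = 0" using fun_cong[OF sum0, of Y]
          by (simp add: sum_fun_apply sc_def)
        then have "of_int d * (\<Sum>w\<in>S. u w * w Y) = 0" by simp
        then have "(\<Sum>w\<in>S. (u w * of_int d) * w Y) = 0"
          by (simp add: sum_distrib_left mult_ac)
        moreover have "(\<Sum>w\<in>S. (u w * of_int d) * w Y) = (\<Sum>w\<in>S. of_int (c w) * w Y)"
          by (rule sum.cong) (simp_all add: c)
        ultimately show ?thesis by simp
      qed
      define E where "E w = poly g (int (Dd n (a w) (a v0)))" for w
      have "(\<Sum>w\<in>S. of_int (c w) * w (a v0 - {n})) = (\<Sum>w\<in>S. (of_int (c w * E w) :: rat))"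
      proof (rule sum.cong)
        fix w assume w: "w \<in> S"
        have "w (a v0 - {n}) = row n g (a w) (a v0 - {n})" using a(2)[OF w] by simp
        also have "\<dots> = of_int (E w)" unfolding E_def using ev[OF a(1)[OF w] a(1)[OF v0(1)]] .
        finally show "of_int (c w) * w (a v0 - {n}) = (of_int (c w * E w) :: rat)" by simp
      qed simp
      then have "(\<Sum>w\<in>S. of_int (c w * E w)) = (0::rat)" using sumY[of "a v0 - {n}"] by simp
      then have "of_int (\<Sum>w\<in>S. c w * E w) = (0::rat)"
        by (simp only: of_int_sum)
      then have "(\<Sum>w\<in>S. c w * E w) = 0" by (simp only: of_int_eq_0_iff)
      then have "c v0 * E v0 + (\<Sum>w\<in>S - {v0}. c w * E w) = 0"
        using finS v0(1) by (simp add: sum.remove)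
      moreover have "P ^ (m + Suc \<nu>) dvd (\<Sum>w\<in>S - {v0}. c w * E w)"
      proof (rule dvd_sum)
        fix w assume w: "w \<in> S - {v0}"
        have "a w \<noteq> a v0" using a[of w] a[of v0] w v0(1) by auto
        then have "P ^ Suc \<nu> dvd E w" unfolding E_def P_def using off a w v0(1) by auto
        then have "P ^ m * P ^ Suc \<nu> dvd c w * E w"
          using w by (intro mult_dvd_mono dvdc) auto
        then show "P ^ (m + Suc \<nu>) dvd c w * E w" by (simp only: power_add)
      qed
      ultimately have dv: "P ^ (m + Suc \<nu>) dvd c v0 * E v0"
      proof -
        assume h: "c v0 * E v0 + (\<Sum>w\<in>S - {v0}. c w * E w) = 0"
          and h2: "P ^ (m + Suc \<nu>) dvd (\<Sum>w\<in>S - {v0}. c w * E w)"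
        from h have "c v0 * E v0 = - (\<Sum>w\<in>S - {v0}. c w * E w)" by (simp add: eq_neg_iff_add_eq_0)
        then show ?thesis using h2 by (simp only: dvd_minus_iff)
      qed
      obtain x where x: "c v0 = P ^ m * x" "\<not> P dvd x"
      proof -
        obtain x where "c v0 = P ^ multiplicity P (c v0) * x" "\<not> P dvd x"
          using multiplicity_decompose'[OF v0(2) nuP] by blast
        moreover have "multiplicity P (c v0) = m" using v0(3) m_def by simp
        ultimately show ?thesis using that by metis
      qed
      obtain y where y: "poly g 0 = P ^ \<nu> * y" using g0(1) P_def by (auto elim: dvdE)
      have ny: "\<not> P dvd y"
      proof
        assume "P dvd y"
        then have "P ^ Suc \<nu> dvd poly g 0" using y by (simp add: mult_dvd_mono)
        then show False using g0(2) P_def by simp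
      qed
      have "E v0 = poly g 0" unfolding E_def using DdA by simp
      then have "c v0 * E v0 = P ^ (m + \<nu>) * (x * y)"
        using x y by (simp add: power_add mult_ac)
      moreover have "P ^ (m + Suc \<nu>) = P ^ (m + \<nu>) * P" by simp
      ultimately have "P ^ (m + \<nu>) * P dvd P ^ (m + \<nu>) * (x * y)" using dv by simp
      moreover have "P ^ (m + \<nu>) \<noteq> 0"
      proof -
        have "P \<noteq> 0" using prP by (metis not_prime_0)
        then show ?thesis by (rule power_not_zero)
      qed
      ultimately have "P dvd x * y" by (simp only: dvd_mult_cancel_left) simp
      then show False using x(2) ny prime_dvd_mult_iff[OF prP] by blast
    qed
  qed
  have finN: "finite {1..n-1}" by simp
  have finMS: "finite (MS {1..n-1} (degree g))" unfolding MS_def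
    by (rule finite_imageI) (rule finite_subset[of _ "Pow {1..n-1}"], auto)
  have RS: "R \<subseteq> VS.span (MS {1..n-1} (degree g))"
    unfolding R_def using row_span FP by blast
  have "card F = card R" unfolding R_def using inj by (simp add: card_image)
  also have "\<dots> \<le> card (MS {1..n-1} (degree g))"
    using VS.independent_span_bound[OF finMS indep RS] by simp
  also have "\<dots> \<le> (\<Sum>i=0..degree g. card {1..n-1} choose i)" by (rule card_MS[OF finN])
  finally show ?thesis by simp
qed


lemma choose_pred_le: "(n - 1) choose i \<le> n choose i"
proof (cases n)
  case (Suc m)
  show ?thesis
  proof (cases i)
    case (Suc j)
    then show ?thesis using \<open>n = Suc m\<close> by simp
  qed simp
qed simp

lemma diff_in_shift:
  assumes L: "L \<subseteq> {1..q-1}" and S: "mod_L_diff_sperner q L F"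
    and A: "A \<in> F" and B: "B \<in> F" and AB: "A \<noteq> B"
  shows "int (card (A - B)) \<in> shift_set L q"
proof -
  obtain l where l: "l \<in> L" "card (A - B) mod q = l mod q"
    using S A B AB unfolding mod_L_diff_sperner_def by blast
  have "l \<in> {1..q-1}" using l(1) L by auto
  then have "l < q" by auto
  then have "l mod q = l" by simp
  then have "card (A - B) = l + q * (card (A - B) div q)"
    using l(2) by (metis add.commute div_mult_mod_eq mult.commute)
  then have "int (card (A - B)) = int l + int q * int (card (A - B) div q)"
    by (metis of_nat_add of_nat_mult)
  then show ?thesis unfolding shift_set_def using l(1) by blast
qed

theorem mainTheorem7:
  fixes p q n :: nat and L :: "nat set" and F :: "nat set set" and g :: "int poly"
  assumes "prime p" and "\<exists>k\<ge>1. q = p ^ k"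
    and "L \<subseteq> {1..q-1}"
    and "F \<subseteq> Pow {1..n}"
    and "mod_L_diff_sperner q L F"
    and "\<forall>u\<in>shift_set L q. vp p (poly g 0) < vp p (poly g u)"
  shows "card F \<le> (\<Sum>i=0..degree g. n choose i) \<and>
         (((\<forall>u\<in>shift_set L q. vp p (poly g 0) \<le> vp p (poly g (u - 1))) \<or>
         (\<forall>u\<in>shift_set L q. vp p (poly g 0) \<le> vp p (poly g (u + 1))))
         \<longrightarrow> card F \<le> (\<Sum>i=0..degree g. (n - 1) choose i))"
proof -
  have le: "(\<Sum>i=0..degree g. (n - 1) choose i) \<le> (\<Sum>i=0..degree g. n choose i)"
    by (intro sum_mono choose_pred_le)
  have strong: "card F \<le> (\<Sum>i=0..degree g. (n - 1) choose i)"
  proof (cases "\<exists>A\<in>F. \<exists>B\<in>F. A \<noteq> B")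
    case False
    then have "card F \<le> 1" by (metis card_le_Suc0_iff_eq finite_Pow_iff finite_atLeastAtMost finite_subset assms(4) One_nat_def)
    moreover have "1 \<le> (\<Sum>i=0..degree g. (n - 1) choose i)"
    proof -
      have "(\<Sum>i=0..0. (n - 1) choose i) \<le> (\<Sum>i=0..degree g. (n - 1) choose i)"
        by (intro sum_mono2) auto
      then show ?thesis by simp
    qed
    ultimately show ?thesis by linarith
  next
    case True
    then obtain A0 B0 where AB0: "A0 \<in> F" "B0 \<in> F" "A0 \<noteq> B0" by blast
    define P where "P = int p"
    have nuP: "\<not> is_unit P" unfolding P_def using assms(1)
      by (metis not_prime_unit prime_nat_int_transfer)
    have "vp p (poly g 0) < vp p (poly g (int (card (A0 - B0))))"
      using assms(6) diff_in_shift[OF assms(3) assms(5) AB0] by blast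
    then have g0nz: "poly g 0 \<noteq> 0" unfolding vp_def by auto
    define \<nu> where "\<nu> = multiplicity P (poly g 0)"
    have g0a: "P ^ \<nu> dvd poly g 0" unfolding \<nu>_def by (rule multiplicity_dvd)
    have g0b: "\<not> P ^ Suc \<nu> dvd poly g 0"
      using power_dvd_iff_le_multiplicity[OF g0nz nuP, of "Suc \<nu>"] unfolding \<nu>_def by simp
    have shiftdvd: "P ^ Suc \<nu> dvd poly g u" if "u \<in> shift_set L q" for u
    proof (cases "poly g u = 0")
      case False
      have "vp p (poly g 0) < vp p (poly g u)" using assms(6) that by blast
      then have "\<nu> < multiplicity P (poly g u)"
        using False g0nz unfolding vp_def \<nu>_def P_def by simp
      then show ?thesis by (intro multiplicity_dvd') simp
    qed simp
    have off: "(int p) ^ Suc \<nu> dvd poly g (int (Dd n A B))"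
      if "A \<in> F" "B \<in> F" "A \<noteq> B" for A B
    proof (cases "n \<in> A")
      case True
      then show ?thesis using shiftdvd diff_in_shift[OF assms(3) assms(5) that(2,1)] that(3)
        unfolding Dd_def P_def by auto
    next
      case False
      then show ?thesis using shiftdvd diff_in_shift[OF assms(3) assms(5) that]
        unfolding Dd_def P_def by auto
    qed
    show ?thesis
      by (rule core[OF assms(1) assms(4) g0a[unfolded P_def] g0b[unfolded P_def] off])
  qed
  show ?thesis using strong le by simp
qed

end
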